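(* An SVN $\mathfrak{g}$ with sufficient storage and sufficient budget under the Single-Objective Framework is bilaterally stable if and only if every agent has backup partnerships with all other agents, i.e. $\mathfrak{g}$ is the complete network.
   Context: $\mathfrak{g}$ is a simple undirected graph on $N$ agents, and $\eta_i(\mathfrak{g})$ is the degree of $i$. The utility is $u_i(\mathfrak{g})=\beta(1-\lambda^{\eta_i(\mathfrak{g})})$ with $\beta,\lambda\in(0,1)$. Sufficient resources means: - agent $i$'s storage $s_i$ satisfies $s_i\ge\sum_{j\ne i}d_j$, where $d_j$ is agent $j$'s data size; - budget $b_i\ge c(N-1)$, where $c$ is the per-link cost. Remaining storage is $RS_i=s_i-\sum_{j\text{ neighbour of }i}d_j$ and remaining budget is $RB_i=b_i-c\,\eta_i(\mathfrak{g})$. $\mathfrak{g}$ is bilaterally stable if both of the following hold. 1. For every link $\langle ij\rangle$: if $u_i(\mathfrak{g}-\langle ij\rangle)>u_i(\mathfrak{g})$, then $u_j(\mathfrak{g}-\langle ij\rangle)<u_j(\mathfrak{g})$. 2. For every non-link $\langle ij\rangle$: if $u_i(\mathfrak{g}+\langle ij\rangle)>u_i(\mathfrak{g})$ and $RS_j\ge d_i$ and $RB_i\ge c$, then $u_j(\mathfrak{g}+\langle ij\rangle)<u_j(\mathfrak{g})$ or $RS_i<d_j$ or $RB_j<c$. *)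

theory Defs
  imports Main "HOL.Real"
begin

definition simple_graph :: "'a set \<Rightarrow> ('a \<Rightarrow> 'a \<Rightarrow> bool) \<Rightarrow> bool" where
  "simple_graph V E \<longleftrightarrow> finite V \<and> (\<forall>i j. E i j \<longrightarrow> E j i)
     \<and> (\<forall>i. \<not> E i i) \<and> (\<forall>i j. E i j \<longrightarrow> i \<in> V \<and> j \<in> V)"

definition neighbours :: "'a set \<Rightarrow> ('a \<Rightarrow> 'a \<Rightarrow> bool) \<Rightarrow> 'a \<Rightarrow> 'a set" where
  "neighbours V E i = {j \<in> V. E i j}"

definition degree :: "'a set \<Rightarrow> ('a \<Rightarrow> 'a \<Rightarrow> bool) \<Rightarrow> 'a \<Rightarrow> nat" where
  "degree V E i = card (neighbours V E i)"

definition add_link :: "('a \<Rightarrow> 'a \<Rightarrow> bool) \<Rightarrow> 'a \<Rightarrow> 'a \<Rightarrow> ('a \<Rightarrow> 'a \<Rightarrow> bool)" where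
  "add_link E i j = (\<lambda>x y. E x y \<or> (x = i \<and> y = j) \<or> (x = j \<and> y = i))"

definition del_link :: "('a \<Rightarrow> 'a \<Rightarrow> bool) \<Rightarrow> 'a \<Rightarrow> 'a \<Rightarrow> ('a \<Rightarrow> 'a \<Rightarrow> bool)" where
  "del_link E i j = (\<lambda>x y. E x y \<and> \<not> (x = i \<and> y = j) \<and> \<not> (x = j \<and> y = i))"

definition utility :: "real \<Rightarrow> real \<Rightarrow> 'a set \<Rightarrow> ('a \<Rightarrow> 'a \<Rightarrow> bool) \<Rightarrow> 'a \<Rightarrow> real" where
  "utility bet lam V E i = bet * (1 - lam ^ degree V E i)"

definition rem_storage :: "('a \<Rightarrow> real) \<Rightarrow> ('a \<Rightarrow> real) \<Rightarrow> 'a set \<Rightarrow> ('a \<Rightarrow> 'a \<Rightarrow> bool) \<Rightarrow> 'a \<Rightarrow> real" where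
  "rem_storage s d V E i = s i - (\<Sum>j\<in>neighbours V E i. d j)"

definition rem_budget :: "('a \<Rightarrow> real) \<Rightarrow> real \<Rightarrow> 'a set \<Rightarrow> ('a \<Rightarrow> 'a \<Rightarrow> bool) \<Rightarrow> 'a \<Rightarrow> real" where
  "rem_budget b c V E i = b i - c * real (degree V E i)"

definition bilaterally_stable ::
  "real \<Rightarrow> real \<Rightarrow> ('a \<Rightarrow> real) \<Rightarrow> ('a \<Rightarrow> real) \<Rightarrow> ('a \<Rightarrow> real) \<Rightarrow> real
    \<Rightarrow> 'a set \<Rightarrow> ('a \<Rightarrow> 'a \<Rightarrow> bool) \<Rightarrow> bool" where
  "bilaterally_stable bet lam s d b c V E \<longleftrightarrow>
     (\<forall>i\<in>V. \<forall>j\<in>V. E i j \<longrightarrow>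
        utility bet lam V (del_link E i j) i > utility bet lam V E i \<longrightarrow>
        utility bet lam V (del_link E i j) j < utility bet lam V E j)
   \<and> (\<forall>i\<in>V. \<forall>j\<in>V. i \<noteq> j \<longrightarrow> \<not> E i j \<longrightarrow>
        (utility bet lam V (add_link E i j) i > utility bet lam V E i
         \<and> rem_storage s d V E j \<ge> d i \<and> rem_budget b c V E i \<ge> c) \<longrightarrow>
        (utility bet lam V (add_link E i j) j < utility bet lam V E j
         \<or> rem_storage s d V E i < d j \<or> rem_budget b c V E j < c))"

definition complete_network :: "'a set \<Rightarrow> ('a \<Rightarrow> 'a \<Rightarrow> bool) \<Rightarrow> bool" where
  "complete_network V E \<longleftrightarrow> (\<forall>i\<in>V. \<forall>j\<in>V. i \<noteq> j \<longrightarrow> E i j)"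

end

theory Submission
  imports Defs
begin

lemma nb_add:
  assumes "i \<in> V" "j \<in> V" "i \<noteq> j"
  shows "neighbours V (add_link E i j) i = insert j (neighbours V E i)"
  using assms by (auto simp: neighbours_def add_link_def)

lemma nb_del:
  assumes "simple_graph V E" "i \<in> V" "j \<in> V" "i \<noteq> j"
  shows "neighbours V (del_link E i j) i = neighbours V E i - {j}"
  using assms by (auto simp: neighbours_def del_link_def)

lemma nb_fin: "simple_graph V E \<Longrightarrow> finite (neighbours V E i)"
  by (auto simp: simple_graph_def neighbours_def)

lemma pow_strict: "0 < (lam::real) \<Longrightarrow> lam < 1 \<Longrightarrow> lam ^ Suc k < lam ^ k"
  by simp

theorem corollary2:
  fixes V :: "'a set" and E :: "'a \<Rightarrow> 'a \<Rightarrow> bool"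
    and bet lam c :: real and s d b :: "'a \<Rightarrow> real"
  assumes graph: "simple_graph V E"
    and beta: "0 < bet" "bet < 1"
    and lambda: "0 < lam" "lam < 1"
    and cost: "0 \<le> c"
    and data: "\<forall>j\<in>V. 0 \<le> d j"
    and storage: "\<forall>i\<in>V. s i \<ge> (\<Sum>j\<in>V - {i}. d j)"
    and budget: "\<forall>i\<in>V. b i \<ge> c * (real (card V) - 1)"
  shows "bilaterally_stable bet lam s d b c V E \<longleftrightarrow> complete_network V E"
proof -
  have finV: "finite V" using graph by (simp add: simple_graph_def)
  have sym: "\<And>x y. E x y \<Longrightarrow> E y x" using graph by (simp add: simple_graph_def)
  have irr: "\<And>x. \<not> E x x" using graph by (simp add: simple_graph_def)
  have nbsub: "\<And>x. neighbours V E x \<subseteq> V - {x}" using irr by (auto simp: neighbours_def)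
  have addU: "utility bet lam V (add_link E x y) x > utility bet lam V E x"
    if "x \<in> V" "y \<in> V" "x \<noteq> y" "\<not> E x y" for x y
  proof -
    have "y \<notin> neighbours V E x" using that by (auto simp: neighbours_def)
    hence "degree V (add_link E x y) x = Suc (degree V E x)"
      using nb_add[OF that(1-3)] nb_fin[OF graph] by (simp add: degree_def)
    thus ?thesis using beta lambda by (simp add: utility_def)
  qed
  have addU': "utility bet lam V (add_link E x y) y > utility bet lam V E y"
    if "x \<in> V" "y \<in> V" "x \<noteq> y" "\<not> E x y" for x y
  proof -
    have "add_link E x y = add_link E y x" by (auto simp: add_link_def fun_eq_iff)
    moreover have "\<not> E y x" using that sym by blast
    ultimately show ?thesis using addU[of y x] that by simp
  qed
  have RS: "rem_storage s d V E y \<ge> d x"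
    if "x \<in> V" "y \<in> V" "x \<noteq> y" "\<not> E y x" for x y
  proof -
    have A: "V - {y} = neighbours V E y \<union> (V - {y} - neighbours V E y)"
      using nbsub by blast
    have "(\<Sum>j\<in>V - {y}. d j) = (\<Sum>j\<in>neighbours V E y. d j) + (\<Sum>j\<in>V - {y} - neighbours V E y. d j)"
      using finV nbsub[of y] by (subst sum.subset_diff[of "neighbours V E y" "V - {y}"]) auto
    moreover have "(\<Sum>j\<in>V - {y} - neighbours V E y. d j) \<ge> d x"
    proof -
      have xin: "x \<in> V - {y} - neighbours V E y" using that by (auto simp: neighbours_def)
      have "(\<Sum>j\<in>{x}. d j) \<le> (\<Sum>j\<in>V - {y} - neighbours V E y. d j)"
        by (rule sum_mono2) (use finV xin data in auto)
      thus ?thesis by simp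
    qed
    moreover have "s y \<ge> (\<Sum>j\<in>V - {y}. d j)" using storage that by blast
    ultimately show ?thesis by (simp add: rem_storage_def)
  qed
  have RB: "rem_budget b c V E x \<ge> c"
    if "x \<in> V" "y \<in> V" "x \<noteq> y" "\<not> E x y" for x y
  proof -
    have "neighbours V E x \<subseteq> V - {x, y}" using nbsub[of x] that by (auto simp: neighbours_def)
    hence "card (neighbours V E x) \<le> card (V - {x,y})" using finV by (intro card_mono) auto
    also have "card (V - {x,y}) = card V - 2" using that finV by (simp add: card_Diff_subset)
    finally have dg: "degree V E x \<le> card V - 2" by (simp add: degree_def)
    have "card V \<ge> 2"
    proof -
      have "{x,y} \<subseteq> V" using that by auto
      hence "card {x,y} \<le> card V" using finV by (intro card_mono)
      thus ?thesis using that by simp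
    qed
    hence "real (degree V E x) \<le> real (card V) - 2" using dg by linarith
    hence "c * real (degree V E x) \<le> c * (real (card V) - 2)" using cost by (intro mult_left_mono)
    moreover have "b x \<ge> c * (real (card V) - 1)" using budget that by blast
    ultimately show ?thesis by (simp add: rem_budget_def algebra_simps)
  qed
  show ?thesis
  proof
    assume st: "bilaterally_stable bet lam s d b c V E"
    show "complete_network V E" unfolding complete_network_def
    proof (intro ballI impI, rule ccontr)
      fix i j assume ij: "i \<in> V" "j \<in> V" "i \<noteq> j" "\<not> E i j"
      have nji: "\<not> E j i" using ij sym by blast
      have "utility bet lam V (add_link E i j) i > utility bet lam V E i
         \<and> rem_storage s d V E j \<ge> d i \<and> rem_budget b c V E i \<ge> c"
        using addU[OF ij] RS[OF ij(1-3) nji] RB[OF ij] by simp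
      moreover have "\<not> (utility bet lam V (add_link E i j) j < utility bet lam V E j
         \<or> rem_storage s d V E i < d j \<or> rem_budget b c V E j < c)"
        using addU'[OF ij] RS[of j i] RB[of j i] ij nji by fastforce
      ultimately show False using st ij unfolding bilaterally_stable_def by blast
    qed
  next
    assume cn: "complete_network V E"
    have "\<not> utility bet lam V (del_link E i j) i > utility bet lam V E i"
      if "i \<in> V" "j \<in> V" "E i j" for i j
    proof -
      have ne: "i \<noteq> j" using that irr by blast
      have jin: "j \<in> neighbours V E i" using that by (simp add: neighbours_def)
      have "degree V E i = Suc (degree V (del_link E i j) i)"
        using nb_del[OF graph that(1,2) ne] jin nb_fin[OF graph]
        unfolding degree_def using card_Suc_Diff1[OF nb_fin[OF graph] jin] by simp
      thus ?thesis using beta lambda by (simp add: utility_def)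
    qed
    thus "bilaterally_stable bet lam s d b c V E"
      using cn unfolding bilaterally_stable_def complete_network_def by blast
  qed
qed

end
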